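(* Let $(K,\delta_K^* )$ be an iterative $q$-difference field whose field of constants is $C$. Then for any elements $x_1,\dots,x_r\in K$ which are linearly independent over $C$, the iterative Taylor series $\mathbf T_{x_1},\dots,\mathbf T_{x_r}$ are linearly independent over $K$; that is, if $a_1,\dots,a_r\in K$ satisfy $\sum_{j=1}^ra_j\delta_K^{(k)}(x_j)=0$ for all $k\in\mathbb N$, then $a_1=\dots=a_r=0$.
   Context: Let $C$ be an algebraically closed field and $q\in C$ with $q\ne1$ (possibly a root of unity). Let $F=C(t)$ with the automorphism $\sigma_q(f(t))=f(qt)$. For $r,k\in\mathbb N$, $\binom{r}{k}_q$ is the value at $q$ of the Gaussian polynomial $\prod_{i=1}^{k}\frac{1-x^{r-i+1}}{1-x^{i}}\in\mathbb Z[x]$. An iterative $q$-difference field is a field $K\supseteq F$ with an automorphism $\sigma_q$ extending that of $F$ and maps $\delta_K^{(k)}:K\to K$ ($k\in\mathbb N$) such that for all $a,b\in K$, $i,j,k$: $\delta_K^{(0)}=\mathrm{id}$; $\delta_K^{(1)}=\frac{\sigma_q-\mathrm{id}}{(q-1)t}$; $\delta_K^{(k)}$ additive; $\delta_K^{(k)}(ab)=\sum_{i+j=k}\sigma_q^i(\delta_K^{(j)}(a))\delta_K^{(i)}(b)$; $\delta_K^{(i)}\circ\delta_K^{(j)}=\binom{i+j}{i}_q\delta_K^{(i+j)}$. Its field of constants is $\{c\in K:\delta_K^{(k)}(c)=0\ \forall k\ge1\}$. The iterative Taylor series of $a\in K$ is $\mathbf T_a=\sum_{k\in\mathbb N}\delta_K^{(k)}(a)T^k\in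 K[[T]]$. *)

theory Defs
  imports "HOL-Computational_Algebra.Polynomial"
begin

text \<open>Gaussian polynomial prod_{i=1}^k (1 - x^(r-i+1)) / (1 - x^i) in Z[x]
  (exact polynomial division), and its value at q.\<close>
definition gauss_poly :: "nat \<Rightarrow> nat \<Rightarrow> int poly" where
  "gauss_poly r k =
     (\<Prod>i\<in>{1..k}. 1 - monom 1 (r + 1 - i)) div (\<Prod>i\<in>{1..k}. 1 - monom 1 i)"

definition qbinom :: "'a::field \<Rightarrow> nat \<Rightarrow> nat \<Rightarrow> 'a" where
  "qbinom q r k = poly (map_poly of_int (gauss_poly r k)) q"

definition is_subfield :: "'a::field set \<Rightarrow> bool" where
  "is_subfield C \<longleftrightarrow> 0 \<in> C \<and> 1 \<in> C \<and>
     (\<forall>a\<in>C. \<forall>b\<in>C. a + b \<in> C \<and> a * b \<in> C) \<and>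
     (\<forall>a\<in>C. - a \<in> C \<and> inverse a \<in> C)"

definition alg_closed_subfield :: "'a::field set \<Rightarrow> bool" where
  "alg_closed_subfield C \<longleftrightarrow>
     (\<forall>p. (\<forall>i. coeff p i \<in> C) \<and> degree p > 0 \<longrightarrow> (\<exists>x\<in>C. poly p x = 0))"

text \<open>t is transcendental over C (so C(t) inside K is the rational function field).\<close>
definition transcendental_over :: "'a::field set \<Rightarrow> 'a \<Rightarrow> bool" where
  "transcendental_over C t \<longleftrightarrow>
     (\<forall>p. (\<forall>i. coeff p i \<in> C) \<and> poly p t = 0 \<longrightarrow> p = 0)"

text \<open>Iterative q-difference field structure on the field (type 'a) containing
  F = C(t), with automorphism sigma extending sigma_q and iterative maps delta.\<close>
definition iter_q_diff_field ::
  "'a::field set \<Rightarrow> 'a \<Rightarrow> 'a \<Rightarrow> ('a \<Rightarrow> 'a) \<Rightarrow> (nat \<Rightarrow> 'a \<Rightarrow> 'a) \<Rightarrow> bool" where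
  "iter_q_diff_field C q t \<sigma> \<delta> \<longleftrightarrow>
     is_subfield C \<and> alg_closed_subfield C \<and> q \<in> C \<and> q \<noteq> 1 \<and>
     transcendental_over C t \<and>
     bij \<sigma> \<and> (\<forall>a b. \<sigma> (a + b) = \<sigma> a + \<sigma> b) \<and> (\<forall>a b. \<sigma> (a * b) = \<sigma> a * \<sigma> b) \<and>
     \<sigma> 1 = 1 \<and> (\<forall>c\<in>C. \<sigma> c = c) \<and> \<sigma> t = q * t \<and>
     (\<forall>a. \<delta> 0 a = a) \<and>
     (\<forall>a. \<delta> 1 a = (\<sigma> a - a) / ((q - 1) * t)) \<and>
     (\<forall>k a b. \<delta> k (a + b) = \<delta> k a + \<delta> k b) \<and>
     (\<forall>k a b. \<delta> k (a * b) = (\<Sum>i\<le>k. (\<sigma> ^^ i) (\<delta> (k - i) a) * \<delta> i b)) \<and>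
     (\<forall>i j a. \<delta> i (\<delta> j a) = qbinom q (i + j) i * \<delta> (i + j) a)"

definition qconstants :: "(nat \<Rightarrow> 'a::field \<Rightarrow> 'a) \<Rightarrow> 'a set" where
  "qconstants \<delta> = {c. \<forall>k\<ge>1. \<delta> k c = 0}"

end

theory Submission
  imports Defs
begin

lemma addhom_zero:
  fixes f :: "'a::field \<Rightarrow> 'a"
  assumes "\<forall>a b. f (a+b) = f a + f b" shows "f 0 = 0"
proof -
  have "f 0 + f 0 = f 0 + 0" using assms[rule_format, of 0 0] by simp
  thus ?thesis by (rule add_left_imp_eq)
qed

lemma addhom_sum:
  fixes f :: "'a::field \<Rightarrow> 'a"
  assumes "\<forall>a b. f (a+b) = f a + f b" shows "f (\<Sum>j\<in>A. g j) = (\<Sum>j\<in>A. f (g j))"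
proof (cases "finite A")
  case True thus ?thesis
    by (induction A rule: finite_induct) (simp_all add: addhom_zero[OF assms] assms)
next
  case False thus ?thesis by (simp add: addhom_zero[OF assms])
qed

lemma funpow_hom:
  fixes f :: "'a::field \<Rightarrow> 'a"
  assumes add: "\<forall>a b. f (a+b) = f a + f b" and mul: "\<forall>a b. f (a*b) = f a * f b"
  shows "\<forall>a b. (f^^l) (a+b) = (f^^l) a + (f^^l) b \<and> (f^^l) (a*b) = (f^^l) a * (f^^l) b"
  by (induction l) (simp_all add: add mul)

lemma inv_hom:
  fixes f :: "'a::field \<Rightarrow> 'a"
  assumes b: "bij f" and add: "\<forall>a b. f (a+b) = f a + f b" and mul: "\<forall>a b. f (a*b) = f a * f b"
  shows "\<forall>a b. inv f (a+b) = inv f a + inv f b" "\<forall>a b. inv f (a*b) = inv f a * inv f b"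
proof -
  show "\<forall>a b. inv f (a+b) = inv f a + inv f b"
  proof (intro allI)
    fix x y
    have "f (inv f x + inv f y) = x + y" using add b by (simp add: surj_f_inv_f bij_is_surj)
    thus "inv f (x+y) = inv f x + inv f y" by (metis b bij_is_inj inv_f_f)
  qed
  show "\<forall>a b. inv f (a*b) = inv f a * inv f b"
  proof (intro allI)
    fix x y
    have "f (inv f x * inv f y) = x * y" using mul b by (simp add: surj_f_inv_f bij_is_surj)
    thus "inv f (x*y) = inv f x * inv f y" by (metis b bij_is_inj inv_f_f)
  qed
qed

lemma inv_funpow1:
  fixes f :: "'a \<Rightarrow> 'a"
  assumes b: "bij f" shows "(inv f ^^ l) ((f ^^ l) y) = y"
proof (induction l arbitrary: y)
  case 0 thus ?case by simp
next
  case (Suc l)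
  have "(f ^^ Suc l) y = (f^^l) (f y)" by (simp add: funpow_Suc_right del: funpow.simps)
  hence "(inv f ^^ Suc l) ((f ^^ Suc l) y) = inv f ((inv f ^^ l) ((f^^l) (f y)))" by simp
  also have "\<dots> = y" using Suc b by (simp add: bij_is_inj)
  finally show ?case .
qed

lemma inv_funpow2:
  fixes f :: "'a \<Rightarrow> 'a"
  assumes b: "bij f" shows "(f ^^ l) ((inv f ^^ l) y) = y"
proof (induction l arbitrary: y)
  case 0 thus ?case by simp
next
  case (Suc l)
  have "(f ^^ Suc l) z = (f^^l) (f z)" for z by (simp add: funpow_Suc_right del: funpow.simps)
  hence "(f ^^ Suc l) ((inv f ^^ Suc l) y) = (f^^l) (f (inv f ((inv f ^^ l) y)))" by simp
  also have "\<dots> = y" using Suc b by (simp add: bij_is_surj surj_f_inv_f)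
  finally show ?case .
qed

theorem theorem2p22:
  fixes C :: "'a::field set" and q t :: 'a and \<sigma> :: "'a \<Rightarrow> 'a"
    and \<delta> :: "nat \<Rightarrow> 'a \<Rightarrow> 'a" and r :: nat and x a :: "nat \<Rightarrow> 'a"
  assumes "iter_q_diff_field C q t \<sigma> \<delta>"
    and "qconstants \<delta> = C"
    and "\<forall>c. (\<forall>j\<in>{1..r}. c j \<in> C) \<and> (\<Sum>j=1..r. c j * x j) = 0
             \<longrightarrow> (\<forall>j\<in>{1..r}. c j = 0)"
    and "\<forall>k. (\<Sum>j=1..r. a j * \<delta> k (x j)) = 0"
  shows "\<forall>j\<in>{1..r}. a j = 0"
proof -
  note D = assms(1)[unfolded iter_q_diff_field_def]
  have sub: "is_subfield C" using D by (elim conjE) assumption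
  have bs: "bij \<sigma>" using D by (elim conjE) assumption
  have sadd: "\<forall>a b. \<sigma> (a + b) = \<sigma> a + \<sigma> b" using D by (elim conjE) assumption
  have smul: "\<forall>a b. \<sigma> (a * b) = \<sigma> a * \<sigma> b" using D by (elim conjE) assumption
  have d0: "\<forall>a. \<delta> 0 a = a" using D by (elim conjE) assumption
  have dadd: "\<forall>k a b. \<delta> k (a + b) = \<delta> k a + \<delta> k b" using D by (elim conjE) assumption
  have dmul: "\<forall>k a b. \<delta> k (a * b) = (\<Sum>i\<le>k. (\<sigma> ^^ i) (\<delta> (k - i) a) * \<delta> i b)" using D by (elim conjE) assumption
  have dcomp: "\<forall>i j a. \<delta> i (\<delta> j a) = qbinom q (i + j) i * \<delta> (i + j) a" using D by (elim conjE) assumption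
  have one: "1 \<in> C" using sub unfolding is_subfield_def by blast
  have d1: "\<delta> k 1 = 0" if "k \<ge> 1" for k
    using one assms(2) that unfolding qconstants_def by blast
  have daddl: "\<forall>a b. \<delta> k (a+b) = \<delta> k a + \<delta> k b" for k using dadd by blast
  have dz: "\<delta> k 0 = 0" for k using addhom_zero[OF daddl] .
  define s where "s = inv \<sigma>"
  have sh: "\<forall>a b. s (a+b) = s a + s b" "\<forall>a b. s (a*b) = s a * s b"
    using inv_hom[OF bs sadd smul] unfolding s_def by auto
  have slh: "\<forall>a b. (s^^l) (a+b) = (s^^l) a + (s^^l) b \<and> (s^^l) (a*b) = (s^^l) a * (s^^l) b" for l
    using funpow_hom[OF sh] .
  have slha: "\<forall>a b. (s^^l) (a+b) = (s^^l) a + (s^^l) b" for l using slh by blast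
  have sl0: "(s^^l) 0 = 0" for l using addhom_zero[OF slha] .
  have sigl0: "(\<sigma>^^l) 0 = 0" for l using addhom_zero funpow_hom[OF sadd smul] by blast
  define P where "P n \<longleftrightarrow> (\<forall>a. card {j\<in>{1..r}. a j \<noteq> 0} = n \<longrightarrow>
     (\<forall>k. (\<Sum>j=1..r. a j * \<delta> k (x j)) = 0) \<longrightarrow> (\<forall>j\<in>{1..r}. a j = 0))" for n
  have "P n" for n
  proof (induction n rule: less_induct)
    case (less n)
    show ?case unfolding P_def
    proof (intro allI impI)
      fix a :: "nat \<Rightarrow> 'a"
      assume cn: "card {j\<in>{1..r}. a j \<noteq> 0} = n"
        and rel: "\<forall>k. (\<Sum>j=1..r. a j * \<delta> k (x j)) = 0"
      show "\<forall>j\<in>{1..r}. a j = 0"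
      proof (rule ccontr)
        assume "\<not> (\<forall>j\<in>{1..r}. a j = 0)"
        then obtain j0 where j0: "j0 \<in> {1..r}" "a j0 \<noteq> 0" by blast
        define a' where "a' j = a j / a j0" for j
        have rel': "(\<Sum>j=1..r. a' j * \<delta> k (x j)) = 0" for k
        proof -
          have "(\<Sum>j=1..r. a' j * \<delta> k (x j)) = (\<Sum>j=1..r. a j * \<delta> k (x j)) / a j0"
            unfolding a'_def by (simp add: sum_divide_distrib)
          thus ?thesis using rel by simp
        qed
        have a'1: "a' j0 = 1" using j0 unfolding a'_def by simp
        have a'z: "a' j = 0 \<longleftrightarrow> a j = 0" for j using j0 unfolding a'_def by simp
        have small: "\<forall>j\<in>{1..r}. b j = 0"
          if h1: "\<forall>j\<in>{1..r}. a' j = 0 \<longrightarrow> b j = 0" and h2: "b j0 = 0"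
            and h3: "\<forall>k. (\<Sum>j=1..r. b j * \<delta> k (x j)) = 0" for b
        proof -
          have sub1: "{j\<in>{1..r}. b j \<noteq> 0} \<subseteq> {j\<in>{1..r}. a j \<noteq> 0}"
            using h1 a'z by blast
          have m1: "j0 \<in> {j\<in>{1..r}. a j \<noteq> 0}" using j0 by simp
          have m2: "j0 \<notin> {j\<in>{1..r}. b j \<noteq> 0}" using h2 by simp
          have ss: "{j\<in>{1..r}. b j \<noteq> 0} \<subset> {j\<in>{1..r}. a j \<noteq> 0}"
            using sub1 m1 m2 by blast
          have fin: "finite {j\<in>{1..r}. a j \<noteq> 0}" by simp
          have "card {j\<in>{1..r}. b j \<noteq> 0} < n"
            using psubset_card_mono[OF fin ss] cn by simp
          hence "P (card {j\<in>{1..r}. b j \<noteq> 0})" by (rule less)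
          hence "\<forall>a. card {j\<in>{1..r}. a j \<noteq> 0} = card {j\<in>{1..r}. b j \<noteq> 0} \<longrightarrow>
             (\<forall>k. (\<Sum>j=1..r. a j * \<delta> k (x j)) = 0) \<longrightarrow> (\<forall>j\<in>{1..r}. a j = 0)"
            unfolding P_def .
          hence "(\<forall>k. (\<Sum>j=1..r. b j * \<delta> k (x j)) = 0) \<longrightarrow> (\<forall>j\<in>{1..r}. b j = 0)"
            by (rule allE[where x=b]) simp
          thus ?thesis using h3 by (rule mp)
        qed
        have key: "\<forall>j\<in>{1..r}. \<delta> l (a' j) = 0" if "l \<ge> 1" for l
          using that
        proof (induction l rule: less_induct)
          case (less l)
          then obtain l' where l': "l = Suc l'" by (cases l) auto
          have eq: "(\<Sum>j=1..r. (\<sigma>^^l) (\<delta> m (x j)) * \<delta> l (a' j)) = 0" for m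
          proof -
            have tm: "\<delta> l (\<delta> m (x j) * a' j) =
                qbinom q (l+m) l * (a' j * \<delta> (l+m) (x j)) + (\<sigma>^^l) (\<delta> m (x j)) * \<delta> l (a' j)"
              if j: "j \<in> {1..r}" for j
            proof -
              define f where "f i = (\<sigma> ^^ i) (\<delta> (l - i) (\<delta> m (x j))) * \<delta> i (a' j)" for i
              have "\<delta> l (\<delta> m (x j) * a' j) = (\<Sum>i\<le>l. f i)" unfolding f_def by (rule dmul[rule_format])
              also have "\<dots> = f 0 + (\<Sum>i<l'. f (Suc i)) + f l"
                unfolding l' by (simp add: sum.atMost_Suc_shift del: sum.atMost_Suc)
                  (simp add: lessThan_Suc_atMost[symmetric])
              also have "(\<Sum>i<l'. f (Suc i)) = 0"
                using less.IH j l' unfolding f_def by (intro sum.neutral) auto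
              also have "f 0 = qbinom q (l+m) l * (a' j * \<delta> (l+m) (x j))"
                unfolding f_def using d0 dcomp by simp
              also have "f l = (\<sigma>^^l) (\<delta> m (x j)) * \<delta> l (a' j)"
                unfolding f_def using d0 by simp
              finally show ?thesis by simp
            qed
            have "0 = \<delta> l (\<Sum>j=1..r. \<delta> m (x j) * a' j)"
              using rel'[of m] dz by (simp add: mult.commute)
            also have "\<dots> = (\<Sum>j=1..r. \<delta> l (\<delta> m (x j) * a' j))"
              by (rule addhom_sum[OF daddl])
            also have "\<dots> = (\<Sum>j=1..r. qbinom q (l+m) l * (a' j * \<delta> (l+m) (x j))
                 + (\<sigma>^^l) (\<delta> m (x j)) * \<delta> l (a' j))"
              using tm by (intro sum.cong) auto
            also have "\<dots> = qbinom q (l+m) l * (\<Sum>j=1..r. a' j * \<delta> (l+m) (x j))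
                 + (\<Sum>j=1..r. (\<sigma>^^l) (\<delta> m (x j)) * \<delta> l (a' j))"
              by (simp add: sum.distrib sum_distrib_left)
            finally show ?thesis using rel'[of "l+m"] by simp
          qed
          define b where "b j = (s ^^ l) (\<delta> l (a' j))" for j
          have relb: "\<forall>m. (\<Sum>j=1..r. b j * \<delta> m (x j)) = 0"
          proof
            fix m
            have "0 = (s^^l) (\<Sum>j=1..r. (\<sigma>^^l) (\<delta> m (x j)) * \<delta> l (a' j))"
              using eq sl0 by simp
            also have "\<dots> = (\<Sum>j=1..r. (s^^l) ((\<sigma>^^l) (\<delta> m (x j)) * \<delta> l (a' j)))"
              by (rule addhom_sum[OF slha])
            also have "\<dots> = (\<Sum>j=1..r. b j * \<delta> m (x j))"
              unfolding b_def s_def using slh[of l] inv_funpow1[OF bs]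
              by (simp add: s_def mult.commute)
            finally show "(\<Sum>j=1..r. b j * \<delta> m (x j)) = 0" by simp
          qed
          have "\<forall>j\<in>{1..r}. b j = 0"
            apply (rule small)
            subgoal unfolding b_def using dz sl0 by simp
            subgoal unfolding b_def using a'1 d1 less.prems sl0 by simp
            subgoal using relb .
            done
          show ?case
          proof
            fix j assume "j \<in> {1..r}"
            hence "b j = 0" using \<open>\<forall>j\<in>{1..r}. b j = 0\<close> by blast
            have "\<delta> l (a' j) = (\<sigma>^^l) (b j)" unfolding b_def s_def using inv_funpow2[OF bs] by simp
            thus "\<delta> l (a' j) = 0" using \<open>b j = 0\<close> sigl0 by simp
          qed
        qed
        have "\<forall>j\<in>{1..r}. a' j \<in> C"
          using key assms(2) unfolding qconstants_def by auto
        moreover have "(\<Sum>j=1..r. a' j * x j) = 0" using rel'[of 0] d0 by simp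
        ultimately have "\<forall>j\<in>{1..r}. a' j = 0" using assms(3) by blast
        thus False using j0 a'1 by simp
      qed
    qed
  qed
  thus ?thesis using assms(4) unfolding P_def by blast
qed

end
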